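(* Let $n,k\ge0$ be integers and assume the numbers $\alpha_i+im$, $i=0,\ldots,k$, are pairwise distinct. Then $$L_{m,\bar{\alpha}}(n,k)=\sum_{j=0}^{k}\frac{\prod_{i=0}^{n-1}(\alpha_j+jm+\alpha_i+im)}{\prod_{i=0,\,i\ne j}^{k}(\alpha_j+jm-\alpha_i-im)}.$$ Moreover, for all integers $n\ge k\ge1$, $$L_{m,\bar{\alpha}}(n,k)=\sum_{j=k}^{n}L_{m,\bar{\alpha}}(j-1,k-1)\prod_{i=j}^{n-1}(\alpha_i+im+\alpha_k+km).$$
   Context: Fix a real number $m$ and a sequence $\bar{\alpha}=(\alpha_0,\alpha_1,\ldots)$ of real numbers. Let $(x;\bar{\alpha}|m)_n=\prod_{j=0}^{n-1}(x-\alpha_j-jm)$, with $(x;\bar{\alpha}|m)_0=1$. The $\bar{\alpha}$-Whitney numbers of the first kind $w_{m,\bar{\alpha}}(n,k)$ and second kind $W_{m,\bar{\alpha}}(n,k)$ are defined by the polynomial identities $(x;\bar{\alpha}|m)_n=\sum_{k=0}^n w_{m,\bar{\alpha}}(n,k)x^k$ and $x^n=\sum_{k=0}^n W_{m,\bar{\alpha}}(n,k)(x;\bar{\alpha}|m)_k$, both vanishing for $k>n$ or $k<0$. The $\bar{\alpha}$-Whitney-Lah numbers are $$L_{m,\bar{\alpha}}(n,k)=\sum_{j=k}^{n}(-1)^{n-j}\,w_{m,\bar{\alpha}}(n,j)\,W_{m,\bar{\alpha}}(j,k),$$ with $L_{m,\bar{\alpha}}(0,0)=1$ and $L_{m,\bar{\alpha}}(n,k)=0$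 for $n<k$ or $k<0$. Empty products equal $1$. *)

theory Defs
  imports "HOL-Computational_Algebra.Polynomial"
begin

definition gfall :: "real \<Rightarrow> (nat \<Rightarrow> real) \<Rightarrow> nat \<Rightarrow> real poly" where
  "gfall m \<alpha> n = (\<Prod>j<n. [:- (\<alpha> j + real j * m), 1:])"

definition wf :: "real \<Rightarrow> (nat \<Rightarrow> real) \<Rightarrow> nat \<Rightarrow> nat \<Rightarrow> real" where
  "wf m \<alpha> n k = coeff (gfall m \<alpha> n) k"

definition Wf :: "real \<Rightarrow> (nat \<Rightarrow> real) \<Rightarrow> nat \<Rightarrow> nat \<Rightarrow> real" where
  "Wf m \<alpha> n = (THE c. (\<forall>k>n. c k = 0) \<and>
      monom 1 n = (\<Sum>k\<le>n. smult (c k) (gfall m \<alpha> k)))"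

text \<open>Whitney-Lah numbers (for n < k the sum is empty, giving 0; L(0,0)=1).\<close>
definition Lah :: "real \<Rightarrow> (nat \<Rightarrow> real) \<Rightarrow> nat \<Rightarrow> nat \<Rightarrow> real" where
  "Lah m \<alpha> n k = (\<Sum>j=k..n. (-1) ^ (n - j) * wf m \<alpha> n j * Wf m \<alpha> j k)"

end

theory Submission
  imports Defs
begin

lemma monic_lin_prod:
  fixes b :: "nat \<Rightarrow> real"
  assumes "finite S"
  shows "degree (\<Prod>i\<in>S. [:- b i, 1:]) = card S \<and> coeff (\<Prod>i\<in>S. [:- b i, 1:]) (card S) = 1"
proof -
  have d: "degree (\<Prod>i\<in>S. [:- b i, 1:]) = card S"
    by (subst degree_prod_eq_sum_degree) auto
  have "lead_coeff (\<Prod>i\<in>S. [:- b i, 1:]) = 1"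
    by (subst lead_coeff_prod) auto
  with d show ?thesis by simp
qed

lemma gfall_deg: "degree (gfall m \<alpha> k) = k" and gfall_lc: "coeff (gfall m \<alpha> k) k = 1"
  using monic_lin_prod[of "{..<k}" "\<lambda>j. \<alpha> j + real j * m"] by (auto simp: gfall_def)

lemma gfall_coeff_gt: "k < i \<Longrightarrow> coeff (gfall m \<alpha> k) i = 0"
  by (rule coeff_eq_0) (simp add: gfall_deg)

lemma gfall_Suc: "gfall m \<alpha> (Suc k) = gfall m \<alpha> k * [:- (\<alpha> k + real k * m), 1:]"
  by (simp add: gfall_def)

lemma gfall_root: "j < k \<Longrightarrow> poly (gfall m \<alpha> k) (\<alpha> j + real j * m) = 0"
  unfolding gfall_def poly_prod
  by (rule prod_zero) (auto intro!: bexI[of _ j])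

lemma newton_unique:
  assumes "(\<Sum>l\<le>n. smult (e l) (gfall m \<alpha> l)) = 0"
  shows "\<forall>l\<le>n. e l = 0"
  using assms
proof (induction n)
  case 0
  then show ?case by (simp add: gfall_def)
next
  case (Suc n)
  have "coeff (\<Sum>l\<le>Suc n. smult (e l) (gfall m \<alpha> l)) (Suc n) = e (Suc n)"
    by (simp add: coeff_sum gfall_lc gfall_coeff_gt)
  with Suc.prems have e: "e (Suc n) = 0" by simp
  with Suc.prems have "(\<Sum>l\<le>n. smult (e l) (gfall m \<alpha> l)) = 0" by simp
  with Suc.IH e show ?case by (auto simp: le_Suc_eq)
qed

lemma newton_exists:
  fixes p :: "real poly"
  assumes "degree p \<le> n"
  shows "\<exists>c. (\<forall>k>n. c k = 0) \<and> p = (\<Sum>k\<le>n. smult (c k) (gfall m \<alpha> k))"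
  using assms
proof (induction n arbitrary: p)
  case 0
  then obtain a where "p = [:a:]" by (metis degree_eq_zeroE le_zero_eq)
  then show ?case
    by (intro exI[of _ "\<lambda>k. if k = 0 then a else 0"]) (simp add: gfall_def)
next
  case (Suc n)
  define q where "q = p - smult (coeff p (Suc n)) (gfall m \<alpha> (Suc n))"
  have "degree q \<le> n"
  proof (rule degree_le, intro allI impI)
    fix i assume "n < i"
    show "coeff q i = 0"
    proof (cases "i = Suc n")
      case True then show ?thesis by (simp add: q_def gfall_lc)
    next
      case False
      then have "Suc n < i" using \<open>n < i\<close> by simp
      then show ?thesis using Suc.prems
        by (simp add: q_def gfall_coeff_gt coeff_eq_0)
    qed
  qed
  from Suc.IH[OF this] obtain c where c: "\<forall>k>n. c k = 0"
    "q = (\<Sum>k\<le>n. smult (c k) (gfall m \<alpha> k))" by blast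
  define c' where "c' = c(Suc n := coeff p (Suc n))"
  have "(\<Sum>k\<le>Suc n. smult (c' k) (gfall m \<alpha> k)) = q + smult (coeff p (Suc n)) (gfall m \<alpha> (Suc n))"
    by (simp add: c(2) c'_def)
  also have "\<dots> = p" by (simp add: q_def)
  finally show ?case using c(1) by (intro exI[of _ c']) (auto simp: c'_def)
qed

lemma newton_unique2:
  assumes "(\<forall>k>n. c k = (0::real))" "(\<forall>k>n. d k = 0)"
    "(\<Sum>k\<le>n. smult (c k) (gfall m \<alpha> k)) = (\<Sum>k\<le>n. smult (d k) (gfall m \<alpha> k))"
  shows "c = d"
proof
  fix k
  have "(\<Sum>l\<le>n. smult (c l - d l) (gfall m \<alpha> l)) = 0"
    using assms(3) by (simp add: smult_diff_left sum_subtractf)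
  from newton_unique[OF this] assms(1,2) show "c k = d k"
    by (cases "k \<le> n") auto
qed

lemma Wf_prop: "(\<forall>k>n. Wf m \<alpha> n k = 0) \<and>
      monom 1 n = (\<Sum>k\<le>n. smult (Wf m \<alpha> n k) (gfall m \<alpha> k))"
proof -
  have "\<exists>!c. (\<forall>k>n. c k = 0) \<and> monom 1 n = (\<Sum>k\<le>n. smult (c k) (gfall m \<alpha> k))"
    using newton_exists[of "monom (1::real) n" n m \<alpha>] newton_unique2[of n _ _ m \<alpha>]
    by (auto simp: degree_monom_le)
  then show ?thesis unfolding Wf_def by (rule theI')
qed

definition Pp :: "real \<Rightarrow> (nat \<Rightarrow> real) \<Rightarrow> nat \<Rightarrow> real poly" where
  "Pp m \<alpha> n = (\<Prod>i<n. [:\<alpha> i + real i * m, 1:])"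

lemma coeff_lin_mult: "coeff ([:c::real, 1:] * p) t = c * coeff p t + (case t of 0 \<Rightarrow> 0 | Suc t' \<Rightarrow> coeff p t')"
  by (auto simp add: mult_pCons_left coeff_pCons split: nat.split)

lemma coeff_Pp: "coeff (Pp m \<alpha> n) t = (-1) ^ (n - t) * coeff (gfall m \<alpha> n) t"
proof (induction n arbitrary: t)
  case 0
  then show ?case by (simp add: Pp_def gfall_def coeff_1)
next
  case (Suc n)
  have P: "Pp m \<alpha> (Suc n) = [:\<alpha> n + real n * m, 1:] * Pp m \<alpha> n"
    by (simp add: Pp_def mult.commute)
  have N: "gfall m \<alpha> (Suc n) = [:- (\<alpha> n + real n * m), 1:] * gfall m \<alpha> n"
    by (simp add: gfall_Suc mult.commute)
  show ?case
  proof (cases t)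
    case 0
    then show ?thesis unfolding P N coeff_lin_mult using Suc.IH by (simp add: algebra_simps)
  next
    case (Suc t')
    show ?thesis
    proof (cases "t' < n")
      case True
      then have e: "n - t' = Suc (n - Suc t')" by simp
      show ?thesis unfolding P N coeff_lin_mult using Suc.IH \<open>t = Suc t'\<close>
        by (simp add: e algebra_simps)
    next
      case False
      then show ?thesis unfolding P N coeff_lin_mult using Suc.IH \<open>t = Suc t'\<close>
        by (simp add: gfall_coeff_gt)
    qed
  qed
qed

lemma Pp_deg: "degree (Pp m \<alpha> n) \<le> n"
proof -
  have "degree (Pp m \<alpha> n) \<le> (\<Sum>i<n. degree [:\<alpha> i + real i * m, 1:])"
    unfolding Pp_def using degree_prod_sum_le[of "{..<n}" "\<lambda>i. [:\<alpha> i + real i * m, 1:]"] by (simp add: o_def)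
  also have "\<dots> = n" by simp
  finally show ?thesis .
qed

lemma smult_sum2: "smult c (sum f S) = (\<Sum>i\<in>S. smult c (f i))"
  by (induct S rule: infinite_finite_induct) (auto simp: smult_add_right)

lemma sum_delta_mult: "finite A \<Longrightarrow> (\<Sum>j\<in>A. (f j::real) * (if j = t then 1 else 0)) = (if t \<in> A then f t else 0)"
proof -
  have "(\<lambda>j. f j * (if j = t then 1 else 0)) = (\<lambda>j. if j = t then f j else 0)" by auto
  moreover assume "finite A"
  ultimately show ?thesis by (simp only:) (simp add: sum.delta')
qed

lemma Lah_gt: "n < k \<Longrightarrow> Lah m \<alpha> n k = 0"
  by (simp add: Lah_def)

lemma Lah_expand: "(\<Sum>k\<le>n. smult (Lah m \<alpha> n k) (gfall m \<alpha> k)) = Pp m \<alpha> n"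
proof -
  let ?w = "\<lambda>j. (-1) ^ (n - j) * wf m \<alpha> n j"
  have "(\<Sum>k\<le>n. smult (Lah m \<alpha> n k) (gfall m \<alpha> k))
      = (\<Sum>k\<le>n. \<Sum>j\<le>n. if k \<le> j then smult (?w j * Wf m \<alpha> j k) (gfall m \<alpha> k) else 0)"
  proof (rule sum.cong[OF refl])
    fix k assume "k \<in> {..n}"
    have "(\<Sum>j\<le>n. if k \<le> j then smult (?w j * Wf m \<alpha> j k) (gfall m \<alpha> k) else 0)
        = (\<Sum>j\<in>{k..n}. smult (?w j * Wf m \<alpha> j k) (gfall m \<alpha> k))"
      by (rule sum.mono_neutral_cong_right) auto
    then show "smult (Lah m \<alpha> n k) (gfall m \<alpha> k) = (\<Sum>j\<le>n. if k \<le> j then smult (?w j * Wf m \<alpha> j k) (gfall m \<alpha> k) else 0)"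
      by (simp add: Lah_def smult_sum)
  qed
  also have "\<dots> = (\<Sum>j\<le>n. \<Sum>k\<le>n. if k \<le> j then smult (?w j * Wf m \<alpha> j k) (gfall m \<alpha> k) else 0)"
    by (rule sum.swap)
  also have "\<dots> = (\<Sum>j\<le>n. smult (?w j) (monom 1 j))"
  proof (rule sum.cong[OF refl])
    fix j assume "j \<in> {..n}"
    then have "(\<Sum>k\<le>n. if k \<le> j then smult (?w j * Wf m \<alpha> j k) (gfall m \<alpha> k) else 0)
       = (\<Sum>k\<le>j. smult (?w j * Wf m \<alpha> j k) (gfall m \<alpha> k))"
      by (intro sum.mono_neutral_cong_right) auto
    also have "\<dots> = smult (?w j) (\<Sum>k\<le>j. smult (Wf m \<alpha> j k) (gfall m \<alpha> k))"
      by (simp add: smult_sum2)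
    also have "\<dots> = smult (?w j) (monom 1 j)"
      using Wf_prop[of j m \<alpha>] by simp
    finally show "(\<Sum>k\<le>n. if k \<le> j then smult (?w j * Wf m \<alpha> j k) (gfall m \<alpha> k) else 0) = smult (?w j) (monom 1 j)" .
  qed
  also have "\<dots> = Pp m \<alpha> n"
  proof (rule poly_eqI)
    fix t
    show "coeff (\<Sum>j\<le>n. smult (?w j) (monom 1 j)) t = coeff (Pp m \<alpha> n) t"
    proof (cases "t \<le> n")
      case True
      then show ?thesis by (simp add: coeff_sum coeff_monom coeff_Pp wf_def sum_delta_mult)
    next
      case False
      then have "coeff (Pp m \<alpha> n) t = 0" using Pp_deg[of m \<alpha> n] by (intro coeff_eq_0) simp
      with False show ?thesis by (simp add: coeff_sum coeff_monom)
    qed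
  qed
  finally show ?thesis .
qed

lemma lin_shift: "N * [:- b, 1:] + smult (c + b) N = [:c::real, 1:] * N"
  by (simp add: mult.commute[of N] mult_pCons_left smult_add_left algebra_simps)

lemma Lah_rec:
  fixes m :: real and \<alpha> :: "nat \<Rightarrow> real"
  defines "a \<equiv> \<lambda>i. \<alpha> i + real i * m"
  assumes "1 \<le> k"
  shows "Lah m \<alpha> (Suc n) k = Lah m \<alpha> n (k - 1) + (a n + a k) * Lah m \<alpha> n k"
proof -
  define d where "d = (\<lambda>l. (if l = 0 then 0 else Lah m \<alpha> n (l - 1)) + (a n + a l) * Lah m \<alpha> n l)"
  have dz: "\<forall>l>Suc n. d l = 0" by (auto simp: d_def Lah_gt)
  have cz: "\<forall>l>Suc n. Lah m \<alpha> (Suc n) l = 0" by (auto simp: Lah_gt)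
  have "(\<Sum>l\<le>Suc n. smult (d l) (gfall m \<alpha> l))
     = (\<Sum>l\<le>Suc n. smult (if l = 0 then 0 else Lah m \<alpha> n (l - 1)) (gfall m \<alpha> l))
       + (\<Sum>l\<le>Suc n. smult ((a n + a l) * Lah m \<alpha> n l) (gfall m \<alpha> l))"
    by (simp add: d_def smult_add_left sum.distrib)
  also have "(\<Sum>l\<le>Suc n. smult (if l = 0 then 0 else Lah m \<alpha> n (l - 1)) (gfall m \<alpha> l))
      = (\<Sum>l\<le>n. smult (Lah m \<alpha> n l) (gfall m \<alpha> (Suc l)))"
    by (subst sum.atMost_Suc_shift) simp
  also have "(\<Sum>l\<le>Suc n. smult ((a n + a l) * Lah m \<alpha> n l) (gfall m \<alpha> l))
      = (\<Sum>l\<le>n. smult ((a n + a l) * Lah m \<alpha> n l) (gfall m \<alpha> l))"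
    by (simp add: Lah_gt)
  also have "(\<Sum>l\<le>n. smult (Lah m \<alpha> n l) (gfall m \<alpha> (Suc l)))
      + (\<Sum>l\<le>n. smult ((a n + a l) * Lah m \<alpha> n l) (gfall m \<alpha> l))
      = (\<Sum>l\<le>n. [:a n, 1:] * smult (Lah m \<alpha> n l) (gfall m \<alpha> l))"
  proof -
    have "\<And>l. smult (Lah m \<alpha> n l) (gfall m \<alpha> (Suc l)) + smult ((a n + a l) * Lah m \<alpha> n l) (gfall m \<alpha> l)
        = [:a n, 1:] * smult (Lah m \<alpha> n l) (gfall m \<alpha> l)"
    proof -
      fix l
      have "smult (Lah m \<alpha> n l) (gfall m \<alpha> (Suc l)) + smult ((a n + a l) * Lah m \<alpha> n l) (gfall m \<alpha> l)
          = smult (Lah m \<alpha> n l) (gfall m \<alpha> l * [:- a l, 1:] + smult (a n + a l) (gfall m \<alpha> l))"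
        by (simp add: gfall_Suc a_def smult_add_right mult.commute)
      also have "\<dots> = smult (Lah m \<alpha> n l) ([:a n, 1:] * gfall m \<alpha> l)"
        by (simp only: lin_shift)
      finally show "?thesis l" by simp
    qed
    then show ?thesis by (simp add: sum.distrib[symmetric])
  qed
  also have "\<dots> = [:a n, 1:] * Pp m \<alpha> n"
    by (simp only: Lah_expand[symmetric] sum_distrib_left)
  also have "\<dots> = Pp m \<alpha> (Suc n)"
    by (simp add: Pp_def a_def mult.commute)
  finally have "(\<Sum>l\<le>Suc n. smult (Lah m \<alpha> (Suc n) l) (gfall m \<alpha> l)) = (\<Sum>l\<le>Suc n. smult (d l) (gfall m \<alpha> l))"
    by (simp add: Lah_expand)
  from newton_unique2[OF cz dz this] have "Lah m \<alpha> (Suc n) k = d k" by simp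
  with assms(2) show ?thesis by (simp add: d_def)
qed

lemma part2:
  fixes m :: real and \<alpha> :: "nat \<Rightarrow> real"
  assumes "1 \<le> k"
  shows "k - 1 \<le> n \<Longrightarrow> Lah m \<alpha> n k =
              (\<Sum>j=k..n. Lah m \<alpha> (j - 1) (k - 1) *
                         (\<Prod>i=j..<n. \<alpha> i + real i * m + \<alpha> k + real k * m))"
proof (induction n)
  case 0
  with assms have "k = 1" by simp
  then show ?case by (simp add: Lah_gt)
next
  case (Suc n)
  let ?g = "\<lambda>i. \<alpha> i + real i * m + \<alpha> k + real k * m"
  show ?case
  proof (cases "k = Suc (Suc n)")
    case True
    then show ?thesis by (simp add: Lah_gt)
  next
    case False
    with Suc.prems have kn: "k \<le> Suc n" "k - 1 \<le> n" by auto
    have "Lah m \<alpha> (Suc n) k = Lah m \<alpha> n (k - 1) + ?g n * Lah m \<alpha> n k"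
      using Lah_rec[OF assms, of m \<alpha> n] by (simp add: algebra_simps)
    also have "\<dots> = Lah m \<alpha> n (k - 1) + (\<Sum>j=k..n. Lah m \<alpha> (j - 1) (k - 1) * (\<Prod>i=j..<n. ?g i) * ?g n)"
      using Suc.IH[OF kn(2)] by (simp add: sum_distrib_left algebra_simps)
    also have "(\<Sum>j=k..n. Lah m \<alpha> (j - 1) (k - 1) * (\<Prod>i=j..<n. ?g i) * ?g n)
        = (\<Sum>j=k..n. Lah m \<alpha> (j - 1) (k - 1) * (\<Prod>i=j..<Suc n. ?g i))"
      by (intro sum.cong refl) (simp add: prod.atLeastLessThan_Suc)
    also have "Lah m \<alpha> n (k - 1) + \<dots> = (\<Sum>j=k..Suc n. Lah m \<alpha> (j - 1) (k - 1) * (\<Prod>i=j..<Suc n. ?g i))"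
      using kn(1) by (simp add: sum.cl_ivl_Suc)
    finally show ?thesis .
  qed
qed

lemma part1:
  fixes m :: real and \<alpha> :: "nat \<Rightarrow> real"
  defines "a \<equiv> \<lambda>i. \<alpha> i + real i * m"
  assumes inj: "inj_on a {0..k}"
  shows "Lah m \<alpha> n k = (\<Sum>j=0..k. poly (Pp m \<alpha> n) (a j) / (\<Prod>i\<in>{0..k} - {j}. a j - a i))"
proof -
  define P where "P = Pp m \<alpha> n"
  define Q where "Q = (\<Sum>l\<le>k. smult (Lah m \<alpha> n l) (gfall m \<alpha> l))"
  define D where "D = (\<lambda>j. \<Prod>i\<in>{0..k} - {j}. a j - a i)"
  define Lg where "Lg = (\<Sum>j\<in>{0..k}. smult (poly P (a j) / D j) (\<Prod>i\<in>{0..k} - {j}. [:- a i, 1:]))"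
  have PQ: "poly P (a j) = poly Q (a j)" if "j \<le> k" for j
  proof -
    have "poly P (a j) = (\<Sum>l\<le>n. Lah m \<alpha> n l * poly (gfall m \<alpha> l) (a j))"
      unfolding P_def Lah_expand[symmetric] by (simp add: poly_sum)
    also have "\<dots> = (\<Sum>l\<le>n+k. Lah m \<alpha> n l * poly (gfall m \<alpha> l) (a j))"
      by (rule sum.mono_neutral_left) (auto simp: Lah_gt)
    also have "\<dots> = (\<Sum>l\<le>k. Lah m \<alpha> n l * poly (gfall m \<alpha> l) (a j))"
      using that by (intro sum.mono_neutral_right) (auto simp: a_def gfall_root)
    also have "\<dots> = poly Q (a j)" by (simp add: Q_def poly_sum)
    finally show ?thesis .
  qed
  have Dnz: "D j \<noteq> 0" if "j \<le> k" for j
    unfolding D_def using inj that by (auto simp: inj_on_def)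
  have LgP: "poly Lg (a t) = poly P (a t)" if "t \<le> k" for t
  proof -
    have "poly Lg (a t) = (\<Sum>j\<in>{0..k}. if j = t then poly P (a t) else 0)"
      unfolding Lg_def poly_sum
    proof (rule sum.cong[OF refl])
      fix j assume j: "j \<in> {0..k}"
      show "poly (smult (poly P (a j) / D j) (\<Prod>i\<in>{0..k} - {j}. [:- a i, 1:])) (a t) = (if j = t then poly P (a t) else 0)"
      proof (cases "j = t")
        case True
        then show ?thesis using Dnz[of t] that by (simp add: poly_prod D_def)
      next
        case False
        have "(\<Prod>i\<in>{0..k} - {j}. poly [:- a i, 1:] (a t)) = 0"
          using False that by (intro prod_zero) (auto intro!: bexI[of _ t])
        with False show ?thesis by (simp add: poly_prod)
      qed
    qed
    also have "\<dots> = poly P (a t)" using that by simp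
    finally show ?thesis .
  qed
  have degQ: "degree Q \<le> k"
    unfolding Q_def
    by (rule degree_sum_le) (auto intro: order.trans[OF degree_smult_le] simp: gfall_deg)
  have degL: "degree Lg \<le> k"
    unfolding Lg_def
  proof (rule degree_sum_le)
    fix j assume "j \<in> {0..k}"
    then have "card ({0..k} - {j}) = k" by simp
    then show "degree (smult (poly P (a j) / D j) (\<Prod>i\<in>{0..k} - {j}. [:- a i, 1:])) \<le> k"
      using monic_lin_prod[of "{0..k} - {j}" a] by (intro order.trans[OF degree_smult_le]) simp
  qed simp
  have card: "card (a ` {0..k}) = Suc k" using inj by (simp add: card_image)
  have "Q = Lg"
    by (rule poly_eqI_degree[of "a ` {0..k}"]) (use PQ LgP degQ degL card in auto)
  have "coeff Q k = Lah m \<alpha> n k"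
  proof -
    have "coeff Q k = (\<Sum>l\<le>k. Lah m \<alpha> n l * (if l = k then 1 else 0))"
      unfolding Q_def coeff_sum
      by (intro sum.cong refl) (auto simp: gfall_lc gfall_coeff_gt)
    then show ?thesis by (simp add: sum_delta_mult)
  qed
  moreover have "coeff Lg k = (\<Sum>j=0..k. poly P (a j) / D j)"
    unfolding Lg_def coeff_sum
  proof (intro sum.cong refl)
    fix j assume "j \<in> {0..k}"
    then have "card ({0..k} - {j}) = k" by simp
    then show "coeff (smult (poly P (a j) / D j) (\<Prod>i\<in>{0..k} - {j}. [:- a i, 1:])) k = poly P (a j) / D j"
      using monic_lin_prod[of "{0..k} - {j}" a] by simp
  qed
  ultimately show ?thesis using \<open>Q = Lg\<close> by (simp add: P_def D_def)
qed

theorem mainTheorem11: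
  fixes m :: real and \<alpha> :: "nat \<Rightarrow> real"
  shows "(\<forall>n k. inj_on (\<lambda>i. \<alpha> i + real i * m) {0..k} \<longrightarrow>
            Lah m \<alpha> n k =
              (\<Sum>j=0..k. (\<Prod>i<n. \<alpha> j + real j * m + \<alpha> i + real i * m) /
                         (\<Prod>i\<in>{0..k} - {j}. \<alpha> j + real j * m - \<alpha> i - real i * m)))
       \<and> (\<forall>n k. 1 \<le> k \<and> k \<le> n \<longrightarrow>
            Lah m \<alpha> n k =
              (\<Sum>j=k..n. Lah m \<alpha> (j - 1) (k - 1) *
                         (\<Prod>i=j..<n. \<alpha> i + real i * m + \<alpha> k + real k * m)))"
proof (intro conjI allI impI)
  fix n k
  assume inj: "inj_on (\<lambda>i. \<alpha> i + real i * m) {0..k}"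
  show "Lah m \<alpha> n k =
              (\<Sum>j=0..k. (\<Prod>i<n. \<alpha> j + real j * m + \<alpha> i + real i * m) /
                         (\<Prod>i\<in>{0..k} - {j}. \<alpha> j + real j * m - \<alpha> i - real i * m))"
    unfolding part1[OF inj]
    by (intro sum.cong refl arg_cong2[where f="(/)"] prod.cong) (auto simp: Pp_def poly_prod algebra_simps)
next
  fix n k :: nat
  assume h: "1 \<le> k \<and> k \<le> n"
  then have h2: "k - 1 \<le> n" by arith
  from h show "Lah m \<alpha> n k =
              (\<Sum>j=k..n. Lah m \<alpha> (j - 1) (k - 1) *
                         (\<Prod>i=j..<n. \<alpha> i + real i * m + \<alpha> k + real k * m))"
    using part2[OF _ h2] by blast
qed

end
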